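(* Suppose the neighbor graph $\mathbb N$ (no self-arcs, $m\ge2$ vertices) is strongly connected and $\chi(\mathbb N)\le n$, where $\chi(\mathbb N)=\min_{\mathrm D}\max_{\mathbb E\in\mathrm D} l(\mathbb E)$, the minimum being over all ear decompositions $\mathrm D$ of $\mathbb N$ and $l(\mathbb E)$ the number of arcs in ear $\mathbb E$. Then there exist matrices $C_{ji}$ (one per arc, each with $n$ columns) with $\ker C_{ji}\ne 0$ for every arc $(j,i)$ such that $\bar{\mathbb N}$ is well-configured.
   Context: Setup: $m$ agents labeled $1,\dots,m$ with states $x_i\in\mathbb R^n$; neighbor graph $\mathbb N$ is a directed graph on $\{1,\dots,m\}$ without self-arcs; each arc $(j,i)$ carries a real matrix $C_{ji}$ with $n$ columns; $\bar{\mathbb N}$ denotes $\mathbb N$ with these matrices. $\bar{\mathbb N}$ is well-configured if for all $x_1,\dots,x_m\in\mathbb R^n$, $C_{ji}x_i=C_{ji}x_j$ for every arc $(j,i)$ implies $x_1=\cdots=x_m$. A directed path is a subgraph with distinct vertices $v_0,\dots,v_k$ ($k\ge1$) and arcs $(v_{r-1},v_r)$; its end-vertices are $v_0,v_k$. A directed cycle is a subgraph with distinct vertices $v_1,\dots,v_k$ ($k\ge 2$) and arcs $(v_r,v_{r+1})$, $r<k$, and $(v_k,v_1)$. An ear decomposition of a directed graph $\mathbb G$ is a sequence of subgraphs $\mathbb E_0,\dots,\mathbb E_p$ such that $\mathbb E_0$ is a directed cycle, each $\mathbb E_i$ ($i\ge1$) is a directed path or directed cycle, the $\mathbb E_i$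 are pairwise arc-disjoint with union $\mathbb G$, and for $i\ge1$: a cycle $\mathbb E_i$ has exactly one vertex in common with $\bigcup_{k<i}\mathbb E_k$, and a path $\mathbb E_i$ has its two end-vertices as the only vertices in common with $\bigcup_{k<i}\mathbb E_k$. A strongly connected graph with at least two vertices has at least one ear decomposition. *)

theory Defs
  imports "Jordan_Normal_Form.Matrix_Kernel"
begin

(* A directed graph on vertex set V is given by its arc set E :: (nat \<times> nat) set,
   an arc (j,i) going from j to i. *)

definition strongly_connected :: "nat set \<Rightarrow> (nat \<times> nat) set \<Rightarrow> bool" where
  "strongly_connected V E \<longleftrightarrow> (\<forall>i\<in>V. \<forall>j\<in>V. (i, j) \<in> E\<^sup>*)"

(* An ear is a directed path or a directed cycle, given by the flag
   (True = cycle, False = path) and its list of distinct vertices. *)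
type_synonym ear = "bool \<times> nat list"

definition is_ear :: "ear \<Rightarrow> bool" where
  "is_ear e \<longleftrightarrow> distinct (snd e) \<and> length (snd e) \<ge> 2"

definition is_cycle :: "ear \<Rightarrow> bool" where
  "is_cycle e \<longleftrightarrow> fst e"

definition ear_verts :: "ear \<Rightarrow> nat set" where
  "ear_verts e = set (snd e)"

definition ear_arcs :: "ear \<Rightarrow> (nat \<times> nat) set" where
  "ear_arcs e = (if fst e then set (zip (snd e) (tl (snd e) @ [hd (snd e)]))
                 else set (zip (snd e) (tl (snd e))))"

definition ear_len :: "ear \<Rightarrow> nat" where
  "ear_len e = card (ear_arcs e)"

definition ear_decomposition :: "nat set \<Rightarrow> (nat \<times> nat) set \<Rightarrow> ear list \<Rightarrow> bool" where
  "ear_decomposition V E D \<longleftrightarrow>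
     D \<noteq> [] \<and> is_cycle (D ! 0) \<and> (\<forall>e\<in>set D. is_ear e) \<and>
     (\<forall>i<length D. \<forall>k<length D. i \<noteq> k \<longrightarrow> ear_arcs (D ! i) \<inter> ear_arcs (D ! k) = {}) \<and>
     (\<Union>e\<in>set D. ear_verts e) = V \<and> (\<Union>e\<in>set D. ear_arcs e) = E \<and>
     (\<forall>i. 1 \<le> i \<and> i < length D \<longrightarrow>
        (let prev = (\<Union>k<i. ear_verts (D ! k)) in
          (if is_cycle (D ! i) then card (ear_verts (D ! i) \<inter> prev) = 1
           else ear_verts (D ! i) \<inter> prev = {hd (snd (D ! i)), last (snd (D ! i))})))"

definition chi :: "nat set \<Rightarrow> (nat \<times> nat) set \<Rightarrow> nat" where
  "chi V E = Min {Max (ear_len ` set D) | D. ear_decomposition V E D}"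

definition well_configured :: "nat \<Rightarrow> nat set \<Rightarrow> (nat \<times> nat) set \<Rightarrow> (nat \<times> nat \<Rightarrow> real mat) \<Rightarrow> bool" where
  "well_configured n V E C \<longleftrightarrow>
     (\<forall>x :: nat \<Rightarrow> real vec. (\<forall>i\<in>V. x i \<in> carrier_vec n) \<longrightarrow>
        (\<forall>(j, i)\<in>E. C (j, i) *\<^sub>v x i = C (j, i) *\<^sub>v x j) \<longrightarrow>
        (\<forall>i\<in>V. \<forall>j\<in>V. x i = x j))"

end

theory Submission
  imports Defs
begin

definition kmat :: "nat \<Rightarrow> nat \<Rightarrow> real mat" where
  "kmat n p = mat n n (\<lambda>(r,c). if r = c \<and> r \<noteq> p then 1 else 0)"

lemma kmat_mult: assumes "x \<in> carrier_vec n" "r < n"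
  shows "(kmat n p *\<^sub>v x) $ r = (if r \<noteq> p then x $ r else 0)"
proof -
  have "(kmat n p *\<^sub>v x) $ r = (\<Sum>c<n. (if r = c \<and> r \<noteq> p then 1 else 0) * x $ c)"
    using assms by (simp add: kmat_def scalar_prod_def row_def lessThan_atLeast0)
  also have "\<dots> = (\<Sum>c<n. if c = r then (if r \<noteq> p then x $ r else 0) else 0)"
    by (rule sum.cong) auto
  also have "\<dots> = (if r \<noteq> p then x $ r else 0)" using assms by simp
  finally show ?thesis .
qed

lemma kmat_eq: assumes "x \<in> carrier_vec n" "y \<in> carrier_vec n"
  "kmat n p *\<^sub>v x = kmat n p *\<^sub>v y" "r < n" "r \<noteq> p"
  shows "x $ r = y $ r"
  using kmat_mult[OF assms(1,4), of p] kmat_mult[OF assms(2,4), of p] assms(3,5) by simp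

lemma kmat_kernel: assumes "p < n" shows "dim_col (kmat n p) = n \<and> mat_kernel (kmat n p) \<noteq> {0\<^sub>v n}"
proof -
  have dr: "dim_row (kmat n p) = n" "dim_col (kmat n p) = n" by (simp_all add: kmat_def)
  have "kmat n p *\<^sub>v unit_vec n p = 0\<^sub>v n"
    by (rule eq_vecI) (auto simp: dr kmat_mult assms kmat_def)
  hence "unit_vec n p \<in> mat_kernel (kmat n p)"
    unfolding mat_kernel_def by (simp add: dr)
  moreover have "(unit_vec n p :: real vec) \<noteq> 0\<^sub>v n"
  proof
    assume "(unit_vec n p :: real vec) = 0\<^sub>v n"
    hence "(unit_vec n p :: real vec) $ p = 0\<^sub>v n $ p" by (simp only:)
    thus False using assms by simp
  qed
  ultimately show ?thesis using dr by auto
qed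
lemma walk_const:
  fixes w :: "nat list" and X :: "nat \<Rightarrow> real vec"
  assumes car: "\<forall>v\<in>set w. X v \<in> carrier_vec n"
    and st: "\<forall>k. Suc k < length w \<longrightarrow> (\<forall>r<n. r \<noteq> k \<longrightarrow> X (w!k) $ r = X (w!Suc k) $ r)"
    and ends: "X (w!0) = X (w!(length w - 1))" and ne: "w \<noteq> []"
  shows "\<forall>k<length w. X (w!k) = X (w!0)"
proof (intro allI impI)
  fix k assume k: "k < length w"
  have ck: "X (w!k) \<in> carrier_vec n" using car k by auto
  have c0: "X (w!0) \<in> carrier_vec n" using car ne by auto
  show "X (w!k) = X (w!0)"
  proof (rule eq_vecI)
    show "dim_vec (X (w!k)) = dim_vec (X (w!0))" using ck c0 by simp
    fix r assume "r < dim_vec (X (w!0))"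
    hence r: "r < n" using c0 by simp
    have A: "j < length w \<Longrightarrow> j \<le> r \<Longrightarrow> X (w!j) $ r = X (w!0) $ r" for j
    proof (induction j)
      case 0 then show ?case by simp
    next
      case (Suc j)
      have "X (w!j) $ r = X (w!Suc j) $ r" using st Suc.prems r by auto
      with Suc show ?case by simp
    qed
    have B: "length w - 1 - d > r \<Longrightarrow> X (w!(length w - 1 - d)) $ r = X (w!(length w - 1)) $ r" for d
    proof (induction d)
      case 0 then show ?case by simp
    next
      case (Suc d)
      have eq: "Suc (length w - 1 - Suc d) = length w - 1 - d" using Suc.prems by simp
      have "X (w!(length w - 1 - Suc d)) $ r = X (w!Suc (length w - 1 - Suc d)) $ r"
      proof -
        have l: "Suc (length w - 1 - Suc d) < length w" using eq ne by (simp add: less_Suc_eq_le)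
        have "r \<noteq> length w - 1 - Suc d" using Suc.prems by simp
        thus ?thesis using st l r by blast
      qed
      also have "\<dots> = X (w!(length w - 1)) $ r" using Suc eq by simp
      finally show ?case .
    qed
    show "X (w!k) $ r = X (w!0) $ r"
    proof (cases "k \<le> r")
      case True then show ?thesis using A k by simp
    next
      case False
      have "k = length w - 1 - (length w - 1 - k)" using k by simp
      hence "X (w!k) $ r = X (w!(length w - 1)) $ r" using B[of "length w - 1 - k"] False by simp
      also have "\<dots> = X (w!0) $ r" using ends by simp
      finally show ?thesis .
    qed
  qed
qed
definition ewalk :: "ear \<Rightarrow> nat list" where
  "ewalk e = (if fst e then snd e @ [hd (snd e)] else snd e)"

lemma zip_app_eqlen: "length xs = length ys \<Longrightarrow> zip (xs @ zs) ys = zip xs ys"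
  by (induction xs ys rule: list_induct2) auto

lemma ear_arcs_walk: "snd e \<noteq> [] \<Longrightarrow> ear_arcs e = set (zip (ewalk e) (tl (ewalk e)))"
proof -
  assume ne: "snd e \<noteq> []"
  then obtain a l where sl: "snd e = a # l" by (cases "snd e") auto
  have "zip ((a#l) @ [a]) (l@[a]) = zip (a#l) (l@[a])" by (rule zip_app_eqlen) simp
  then show ?thesis unfolding ear_arcs_def ewalk_def sl by simp
qed

lemma arcs_nth: "set (zip w (tl w)) = {(w!k, w!Suc k) | k. Suc k < length w}"
  by (auto simp: set_zip nth_tl)

lemma ewalk_len: "length (ewalk e) = length (snd e) + (if fst e then 1 else 0)"
  by (simp add: ewalk_def)

lemma ewalk_nth: "k < length (snd e) \<Longrightarrow> ewalk e ! k = snd e ! k"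
  by (simp add: ewalk_def nth_append)

lemma ewalk_set: "snd e \<noteq> [] \<Longrightarrow> set (ewalk e) = set (snd e)"
  by (cases "snd e") (auto simp: ewalk_def)

lemma ewalk_last: "snd e \<noteq> [] \<Longrightarrow>
  ewalk e ! (length (ewalk e) - 1) = (if fst e then hd (snd e) else last (snd e))"
  by (auto simp: ewalk_def nth_append last_conv_nth)

lemma ear_card: assumes "is_ear e" shows "ear_len e = length (ewalk e) - 1"
proof -
  have d: "distinct (snd e)" and l: "length (snd e) \<ge> 2" using assms by (auto simp: is_ear_def)
  show ?thesis
  proof (cases "fst e")
    case True
    have "card (set (zip (snd e) (tl (snd e) @ [hd (snd e)]))) = length (zip (snd e) (tl (snd e) @ [hd (snd e)]))"
      by (rule distinct_card) (rule distinct_zipI1[OF d])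
    then show ?thesis using True l by (simp add: ear_len_def ear_arcs_def ewalk_def)
  next
    case False
    have "card (set (zip (snd e) (tl (snd e)))) = length (zip (snd e) (tl (snd e)))"
      by (rule distinct_card) (rule distinct_zipI1[OF d])
    then show ?thesis using False l by (simp add: ear_len_def ear_arcs_def ewalk_def)
  qed
qed
lemma dec_wc:
  assumes D: "ear_decomposition V E D" and mx: "Max (ear_len ` set D) \<le> n"
  shows "\<exists>C :: nat \<times> nat \<Rightarrow> real mat.
           (\<forall>a\<in>E. dim_col (C a) = n \<and> mat_kernel (C a) \<noteq> {0\<^sub>v n}) \<and>
           well_configured n V E C"
proof -
  from D have Dne: "D \<noteq> []" and cyc0: "is_cycle (D!0)" and ears: "\<forall>e\<in>set D. is_ear e"
    and disj: "\<forall>i<length D. \<forall>k<length D. i \<noteq> k \<longrightarrow> ear_arcs (D ! i) \<inter> ear_arcs (D ! k) = {}"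
    and UV: "(\<Union>e\<in>set D. ear_verts e) = V" and UE: "(\<Union>e\<in>set D. ear_arcs e) = E"
    and pre: "\<forall>i. 1 \<le> i \<and> i < length D \<longrightarrow>
        (let prev = (\<Union>k<i. ear_verts (D ! k)) in
          (if is_cycle (D ! i) then card (ear_verts (D ! i) \<inter> prev) = 1
           else ear_verts (D ! i) \<inter> prev = {hd (snd (D ! i)), last (snd (D ! i))}))"
    unfolding ear_decomposition_def by blast+
  have sne: "snd e \<noteq> []" if "e \<in> set D" for e using ears that by (auto simp: is_ear_def)
  define earof where "earof a = (SOME e. e \<in> set D \<and> a \<in> ear_arcs e)" for a
  define pos where "pos a = (SOME k. k < length (snd (earof a)) \<and> snd (earof a) ! k = fst a)" for a
  define C where "C a = kmat n (pos a)" for a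
  have uniq: "earof a = e" if eD: "e \<in> set D" "a \<in> ear_arcs e" for a e
  proof -
    have "earof a \<in> set D \<and> a \<in> ear_arcs (earof a)"
      unfolding earof_def by (rule someI[of _ e]) (use that in auto)
    then obtain i where i: "i < length D" "D!i = earof a"
      and a: "a \<in> ear_arcs (earof a)" by (auto simp: in_set_conv_nth)
    obtain k where k: "k < length D" "D!k = e" using eD by (auto simp: in_set_conv_nth)
    show ?thesis
    proof (rule ccontr)
      assume "earof a \<noteq> e"
      hence ik: "i \<noteq> k" using i k by auto
      have "ear_arcs (D!i) \<inter> ear_arcs (D!k) = {}" using disj i(1) k(1) ik by blast
      thus False using a eD(2) i(2) k(2) by auto
    qed
  qed
  have posk: "pos (ewalk e ! k, ewalk e ! Suc k) = k" if "e \<in> set D" "Suc k < length (ewalk e)" for e k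
  proof -
    have arc: "(ewalk e ! k, ewalk e ! Suc k) \<in> ear_arcs e"
      using that sne[OF that(1)] by (auto simp: ear_arcs_walk arcs_nth)
    have eo: "earof (ewalk e ! k, ewalk e ! Suc k) = e" by (rule uniq[OF that(1) arc])
    have kl: "k < length (snd e)" using that(2) by (auto simp: ewalk_len split: if_splits)
    have d: "distinct (snd e)" using ears that(1) by (auto simp: is_ear_def)
    have P: "\<And>j. j < length (snd e) \<and> snd e ! j = ewalk e ! k \<Longrightarrow> j = k"
      using nth_eq_iff_index_eq[OF d _ kl] ewalk_nth[OF kl] by auto
    show ?thesis unfolding pos_def eo fst_conv
      by (rule someI2[of _ k]) (use kl ewalk_nth[OF kl] P in auto)
  qed
  have arcE: "\<exists>e\<in>set D. \<exists>k. Suc k < length (ewalk e) \<and> a = (ewalk e ! k, ewalk e ! Suc k)" if aE: "a \<in> E" for a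
  proof -
    obtain e where e: "e \<in> set D" "a \<in> ear_arcs e" using UE aE by blast
    hence "a \<in> {(ewalk e!k, ewalk e!Suc k) | k. Suc k < length (ewalk e)}"
      using ear_arcs_walk[OF sne[OF e(1)]] arcs_nth by metis
    thus ?thesis using e(1) by blast
  qed
  have posn: "pos a < n" if aE': "a \<in> E" for a
  proof -
    obtain e k where e: "e \<in> set D" and k: "Suc k < length (ewalk e)" and a: "a = (ewalk e ! k, ewalk e ! Suc k)"
      using arcE[OF aE'] by blast
    have "pos a = k" using posk e k a by simp
    also have "k < ear_len e" using ear_card ears e k by auto
    also have "ear_len e \<le> Max (ear_len ` set D)" using e by simp
    finally show ?thesis using mx by simp
  qed
  have "well_configured n V E C"
    unfolding well_configured_def
  proof (intro allI impI)
    fix X :: "nat \<Rightarrow> real vec"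
    assume car: "\<forall>i\<in>V. X i \<in> carrier_vec n"
      and eqs: "\<forall>(j, i)\<in>E. C (j, i) *\<^sub>v X i = C (j, i) *\<^sub>v X j"
    have everts: "set (ewalk e) \<subseteq> V" if "e \<in> set D" for e
      using UV that sne[OF that] by (auto simp: ewalk_set ear_verts_def)
    have ear_const: "\<forall>k<length (ewalk e). X (ewalk e ! k) = X (ewalk e ! 0)"
      if e: "e \<in> set D" and ends: "X (ewalk e ! 0) = X (ewalk e ! (length (ewalk e) - 1))" for e
    proof (rule walk_const[OF _ _ ends])
      show "\<forall>v\<in>set (ewalk e). X v \<in> carrier_vec n" using everts[OF e] car by auto
      show "ewalk e \<noteq> []" using sne[OF e] by (simp add: ewalk_def)
      show "\<forall>k. Suc k < length (ewalk e) \<longrightarrow> (\<forall>r<n. r \<noteq> k \<longrightarrow> X (ewalk e ! k) $ r = X (ewalk e ! Suc k) $ r)"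
      proof (intro allI impI)
        fix k r assume k: "Suc k < length (ewalk e)" and r: "r < n" "r \<noteq> k"
        have "(ewalk e ! k, ewalk e ! Suc k) \<in> {(ewalk e!k, ewalk e!Suc k) | k. Suc k < length (ewalk e)}"
          using k by blast
        hence "(ewalk e ! k, ewalk e ! Suc k) \<in> ear_arcs e"
          using ear_arcs_walk[OF sne[OF e]] arcs_nth by metis
        hence inE: "(ewalk e ! k, ewalk e ! Suc k) \<in> E" using UE e by blast
        have "ewalk e ! k \<in> set (ewalk e)" "ewalk e ! Suc k \<in> set (ewalk e)" using k by simp_all
        hence c1: "X (ewalk e ! k) \<in> carrier_vec n" "X (ewalk e ! Suc k) \<in> carrier_vec n"
          using everts[OF e] car by blast+
        have "C (ewalk e ! k, ewalk e ! Suc k) *\<^sub>v X (ewalk e ! Suc k) = C (ewalk e ! k, ewalk e ! Suc k) *\<^sub>v X (ewalk e ! k)"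
          using eqs inE by auto
        hence "kmat n k *\<^sub>v X (ewalk e ! Suc k) = kmat n k *\<^sub>v X (ewalk e ! k)"
          unfolding C_def posk[OF e k] .
        from kmat_eq[OF c1(2) c1(1) this r] show "X (ewalk e ! k) $ r = X (ewalk e ! Suc k) $ r" by simp
      qed
    qed
    have vert_const: "\<forall>v\<in>ear_verts e. X v = X (ewalk e ! 0)"
      if e: "e \<in> set D" and ends: "X (ewalk e ! 0) = X (ewalk e ! (length (ewalk e) - 1))" for e
    proof
      fix v assume "v \<in> ear_verts e"
      hence "v \<in> set (ewalk e)" using ewalk_set[OF sne[OF e]] by (simp add: ear_verts_def)
      then obtain k where "k < length (ewalk e)" "v = ewalk e ! k" by (auto simp: in_set_conv_nth)
      thus "X v = X (ewalk e ! 0)" using ear_const[OF e ends] by simp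
    qed
    have w0: "ewalk e ! 0 = hd (snd e)" if "e \<in> set D" for e
      using sne[OF that] by (simp add: ewalk_def nth_append hd_conv_nth)
    define c where "c = X (hd (snd (D!0)))"
    have main: "\<forall>v\<in>ear_verts (D!i). X v = c" if "i < length D" for i
      using that
    proof (induction i rule: less_induct)
      case (less i)
      have e: "D!i \<in> set D" using less.prems by simp
      show ?case
      proof (cases "i = 0")
        case True
        have "X (ewalk (D!0) ! 0) = X (ewalk (D!0) ! (length (ewalk (D!0)) - 1))"
          using ewalk_last[OF sne[OF e]] w0[OF e] cyc0 True by (simp add: is_cycle_def)
        then show ?thesis using vert_const[of "D!0"] e True w0[OF e] c_def by simp
      next
        case False
        have IH: "X v = c" if "v \<in> (\<Union>k<i. ear_verts (D ! k))" for v
          using that less.IH less.prems by auto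
        have pi: "let prev = (\<Union>k<i. ear_verts (D ! k)) in
          (if is_cycle (D ! i) then card (ear_verts (D ! i) \<inter> prev) = 1
           else ear_verts (D ! i) \<inter> prev = {hd (snd (D ! i)), last (snd (D ! i))})"
          using pre False less.prems by simp
        show ?thesis
        proof (cases "is_cycle (D!i)")
          case True
          have ends: "X (ewalk (D!i) ! 0) = X (ewalk (D!i) ! (length (ewalk (D!i)) - 1))"
            using ewalk_last[OF sne[OF e]] w0[OF e] True by (simp add: is_cycle_def)
          have "card (ear_verts (D ! i) \<inter> (\<Union>k<i. ear_verts (D ! k))) = 1"
            using pi True by (simp add: Let_def)
          then obtain u where "ear_verts (D ! i) \<inter> (\<Union>k<i. ear_verts (D ! k)) = {u}"
            by (rule card_1_singletonE)
          hence u: "u \<in> ear_verts (D!i)" "u \<in> (\<Union>k<i. ear_verts (D ! k))" by auto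
          have "X u = c" using IH u(2) .
          moreover have "X u = X (ewalk (D!i) ! 0)" using vert_const[OF e ends] u(1) by simp
          ultimately show ?thesis using vert_const[OF e ends] by simp
        next
          case False
          have "ear_verts (D ! i) \<inter> (\<Union>k<i. ear_verts (D ! k)) = {hd (snd (D ! i)), last (snd (D ! i))}"
            using pi False by (simp add: Let_def)
          hence hl: "X (hd (snd (D ! i))) = c" "X (last (snd (D ! i))) = c" using IH by auto
          have ends: "X (ewalk (D!i) ! 0) = X (ewalk (D!i) ! (length (ewalk (D!i)) - 1))"
            using ewalk_last[OF sne[OF e]] w0[OF e] False hl by (simp add: is_cycle_def)
          show ?thesis using vert_const[OF e ends] w0[OF e] hl by simp
        qed
      qed
    qed
    show "\<forall>i\<in>V. \<forall>j\<in>V. X i = X j"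
    proof (intro ballI)
      fix i j assume "i \<in> V" "j \<in> V"
      then obtain a b where "a < length D" "i \<in> ear_verts (D!a)" "b < length D" "j \<in> ear_verts (D!b)"
        using UV by (auto simp: in_set_conv_nth)
      thus "X i = X j" using main[of a] main[of b] by simp
    qed
  qed
  moreover have "\<forall>a\<in>E. dim_col (C a) = n \<and> mat_kernel (C a) \<noteq> {0\<^sub>v n}"
    using posn kmat_kernel by (simp add: C_def)
  ultimately show ?thesis by blast
qed
definition arcs_of :: "nat list \<Rightarrow> (nat \<times> nat) set" where
  "arcs_of ps = set (zip ps (tl ps))"

lemma arcs_of_Cons: "ps \<noteq> [] \<Longrightarrow> arcs_of (x # ps) = insert (x, hd ps) (arcs_of ps)"
  by (cases ps) (auto simp: arcs_of_def)

lemma arcs_of_single[simp]: "arcs_of [x] = {}" by (simp add: arcs_of_def)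

lemma arcs_of_suffix: "arcs_of ys \<subseteq> arcs_of (xs @ ys)"
proof (induction xs)
  case Nil then show ?case by simp
next
  case (Cons x xs)
  show ?case
  proof (cases "xs @ ys = []")
    case True then show ?thesis by (simp add: arcs_of_def)
  next
    case False
    then show ?thesis using Cons arcs_of_Cons[OF False, of x] by auto
  qed
qed

lemma arcs_of_src: "(x, y) \<in> arcs_of ps \<Longrightarrow> x \<in> set (butlast ps)"
proof (induction ps)
  case Nil then show ?case by (simp add: arcs_of_def)
next
  case (Cons p ps)
  show ?case
  proof (cases "ps = []")
    case True then show ?thesis using Cons by simp
  next
    case False
    then show ?thesis using Cons arcs_of_Cons[OF False, of p] by auto
  qed
qed

lemma arcs_of_set: "(x, y) \<in> arcs_of ps \<Longrightarrow> x \<in> set ps \<and> y \<in> set ps"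
proof -
  assume a: "(x, y) \<in> arcs_of ps"
  hence "x \<in> set ps" "y \<in> set (tl ps)" unfolding arcs_of_def by (auto dest: set_zip_leftD set_zip_rightD)
  thus ?thesis by (cases ps) auto
qed

lemma path_to:
  assumes "(b, u) \<in> E\<^sup>*" "u \<in> U" "b \<notin> U" "E \<subseteq> V \<times> V"
  shows "\<exists>ps. ps \<noteq> [] \<and> hd ps = b \<and> last ps \<in> U \<and> distinct ps \<and> (\<forall>x\<in>set (butlast ps). x \<notin> U)
           \<and> arcs_of ps \<subseteq> E \<and> set ps \<subseteq> V"
  using assms(1,3)
proof (induction rule: converse_rtrancl_induct)
  case base then show ?case using assms(2) by simp
next
  case (step b c)
  have bV: "b \<in> V" "c \<in> V" using step.hyps(1) assms(4) by auto
  show ?case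
  proof (cases "c \<in> U")
    case True
    show ?thesis
      by (rule exI[of _ "[b, c]"]) (use True step.prems step.hyps(1) bV in \<open>auto simp: arcs_of_Cons\<close>)
  next
    case False
    then obtain ps where ps: "ps \<noteq> []" "hd ps = c" "last ps \<in> U" "distinct ps"
      "\<forall>x\<in>set (butlast ps). x \<notin> U" "arcs_of ps \<subseteq> E" "set ps \<subseteq> V"
      using step.IH by blast
    show ?thesis
    proof (cases "b \<in> set ps")
      case True
      then obtain xs ys where sp: "ps = xs @ b # ys" by (meson split_list)
      have "arcs_of (b # ys) \<subseteq> arcs_of ps" unfolding sp by (rule arcs_of_suffix)
      moreover have "last (b # ys) = last ps" unfolding sp by simp
      moreover have "butlast ps = xs @ butlast (b # ys)" unfolding sp by (simp add: butlast_append)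
      ultimately show ?thesis
        by (intro exI[of _ "b # ys"]) (use ps sp in auto)
    next
      case False
      have "butlast (b # ps) = b # butlast ps" using ps(1) by simp
      moreover have "arcs_of (b # ps) = insert (b, c) (arcs_of ps)" using arcs_of_Cons[OF ps(1)] ps(2) by simp
      ultimately show ?thesis
        by (intro exI[of _ "b # ps"]) (use ps False step.prems step.hyps(1) bV in auto)
    qed
  qed
qed
lemma ear_arcs_of: "snd e \<noteq> [] \<Longrightarrow> ear_arcs e = arcs_of (ewalk e)"
  using ear_arcs_walk by (simp add: arcs_of_def)

lemma new_ear:
  assumes aU: "a \<in> U" and ab: "(a, b) \<in> E" and ba: "(b, a) \<in> E\<^sup>*" and EV: "E \<subseteq> V \<times> V"
    and neq: "a \<noteq> b"
  shows "\<exists>e. is_ear e \<and> ear_verts e \<subseteq> V \<and> ear_arcs e \<subseteq> E \<and> (a, b) \<in> ear_arcs e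
     \<and> ear_arcs e \<subseteq> insert (a, b) {(x, y). x \<notin> U \<or> y \<notin> U}
     \<and> (if is_cycle e then card (ear_verts e \<inter> U) = 1
        else ear_verts e \<inter> U = {hd (snd e), last (snd e)})
     \<and> (U = {a} \<longrightarrow> is_cycle e)"
proof (cases "b \<in> U")
  case True
  let ?e = "(False, [a, b])"
  have "ear_arcs ?e = {(a, b)}" by (simp add: ear_arcs_def)
  moreover have "ear_verts ?e = {a, b}" by (simp add: ear_verts_def)
  ultimately show ?thesis
    by (intro exI[of _ ?e]) (use True aU ab EV neq in \<open>auto simp: is_ear_def is_cycle_def\<close>)
next
  case False
  obtain ps where ps: "ps \<noteq> []" "hd ps = b" "last ps \<in> U" "distinct ps"
      "\<forall>x\<in>set (butlast ps). x \<notin> U" "arcs_of ps \<subseteq> E" "set ps \<subseteq> V"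
    using path_to[OF ba aU False EV] by blast
  obtain ys z where psd: "ps = ys @ [z]" using ps(1) by (cases ps rule: rev_exhaust) auto
  have bl: "butlast ps = ys" "last ps = z" using psd by simp_all
  have aV: "a \<in> V" using ab EV by auto
  have ys_ne: "ys \<noteq> []"
  proof
    assume "ys = []"
    hence "b = z" using ps(2) psd by simp
    thus False using False ps(3) bl by simp
  qed
  have aps: "arcs_of (a # ps) = insert (a, b) (arcs_of ps)" using arcs_of_Cons[OF ps(1)] ps(2) by simp
  have "arcs_of ps \<subseteq> {(x, y). x \<notin> U \<or> y \<notin> U}"
  proof (rule subsetI)
    fix p assume p: "p \<in> arcs_of ps"
    obtain x y where xy: "p = (x, y)" by (cases p)
    have "x \<in> set (butlast ps)" using arcs_of_src p xy by simp
    thus "p \<in> {(x, y). x \<notin> U \<or> y \<notin> U}" using ps(5) xy by simp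
  qed
  hence arcsU: "arcs_of (a # ps) \<subseteq> insert (a, b) {(x, y). x \<notin> U \<or> y \<notin> U}"
    using aps by blast
  have arcsE: "arcs_of (a # ps) \<subseteq> E" unfolding aps using ps(6) ab by simp
  have abin: "(a, b) \<in> arcs_of (a # ps)" using aps by simp
  have ysU: "\<forall>x\<in>set ys. x \<notin> U" using ps(5) bl by simp
  have dys: "distinct ys" "z \<notin> set ys" using ps(4) psd by simp_all
  have psV: "set ys \<subseteq> V" "z \<in> V" using ps(7) psd by simp_all
  show ?thesis
  proof (cases "z = a")
    case True
    let ?e = "(True, a # ys)"
    have w: "ewalk ?e = a # ps" unfolding ewalk_def using psd True by simp
    have arcs: "ear_arcs ?e = arcs_of (a # ps)" using ear_arcs_of[of ?e] w by simp
    have verts: "ear_verts ?e = insert a (set ys)" by (simp add: ear_verts_def)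
    have anot: "a \<notin> set ys" using ysU aU by auto
    have "ear_verts ?e \<inter> U = {a}" using verts ysU aU by auto
    hence c1: "card (ear_verts ?e \<inter> U) = 1" by simp
    have ie: "is_ear ?e" using anot dys ys_ne by (cases ys) (auto simp: is_ear_def)
    have vV: "ear_verts ?e \<subseteq> V" using verts aV psV by auto
    show ?thesis
      by (intro exI[of _ ?e]) (use arcs arcsU arcsE abin c1 ie vV in \<open>simp add: is_cycle_def\<close>)
  next
    case False
    let ?e = "(False, a # ps)"
    have w: "ewalk ?e = a # ps" unfolding ewalk_def by simp
    have arcs: "ear_arcs ?e = arcs_of (a # ps)" using ear_arcs_of[of ?e] w by simp
    have verts: "ear_verts ?e = insert a (insert z (set ys))" using psd by (simp add: ear_verts_def)
    have anot: "a \<notin> set ps" using ysU aU False psd by auto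
    have "ear_verts ?e \<inter> U = {a, z}" using verts ysU ps(3) bl aU by auto
    hence c1: "ear_verts ?e \<inter> U = {hd (snd ?e), last (snd ?e)}" using psd by simp
    have ie: "is_ear ?e" using anot ps(4) ps(1) by (cases ps) (auto simp: is_ear_def)
    have vV: "ear_verts ?e \<subseteq> V" using verts aV psV by auto
    have nc: "U = {a} \<longrightarrow> False" using ps(3) bl False by auto
    show ?thesis
      by (intro exI[of _ ?e]) (use arcs arcsU arcsE abin c1 ie vV nc in \<open>simp add: is_cycle_def\<close>)
  qed
qed

abbreviation UVD :: "ear list \<Rightarrow> nat set" where "UVD D \<equiv> (\<Union>e\<in>set D. ear_verts e)"
abbreviation UFD :: "ear list \<Rightarrow> (nat \<times> nat) set" where "UFD D \<equiv> (\<Union>e\<in>set D. ear_arcs e)"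

definition pdec :: "nat set \<Rightarrow> (nat \<times> nat) set \<Rightarrow> ear list \<Rightarrow> bool" where
  "pdec V E D \<longleftrightarrow> ear_decomposition (UVD D) (UFD D) D \<and> UVD D \<subseteq> V \<and> UFD D \<subseteq> E"

lemma ear_arcs_verts: "ear_arcs e \<subseteq> ear_verts e \<times> ear_verts e"
proof
  fix p assume p: "p \<in> ear_arcs e"
  obtain x y where xy: "p = (x, y)" by (cases p)
  show "p \<in> ear_verts e \<times> ear_verts e"
  proof (cases "snd e = []")
    case True
    have "ear_arcs e = {}" unfolding ear_arcs_def True by simp
    then show ?thesis using p by simp
  next
    case False
    have "(x, y) \<in> arcs_of (ewalk e)" using p xy ear_arcs_of[OF False] by simp
    hence "x \<in> set (ewalk e)" "y \<in> set (ewalk e)" using arcs_of_set by blast+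
    thus ?thesis using ewalk_set[OF False] xy by (simp add: ear_verts_def)
  qed
qed

lemma UN_nth: "(\<Union>k<length D. f (D ! k)) = (\<Union>e\<in>set D. f e)"
proof -
  have "(\<lambda>k. D ! k) ` {..<length D} = set D" by (auto simp: in_set_conv_nth image_def)
  thus ?thesis by (metis image_image)
qed

lemma pdec_extend:
  assumes P: "pdec V E D" and ie: "is_ear e" and dj: "ear_arcs e \<inter> UFD D = {}"
    and vV: "ear_verts e \<subseteq> V" and aE: "ear_arcs e \<subseteq> E"
    and cond: "if is_cycle e then card (ear_verts e \<inter> UVD D) = 1
        else ear_verts e \<inter> UVD D = {hd (snd e), last (snd e)}"
  shows "pdec V E (D @ [e])"
proof -
  note Pu = P[unfolded pdec_def ear_decomposition_def]
  have Dne: "D \<noteq> []" using Pu by (elim conjE) assumption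
  have cyc0: "is_cycle (D!0)" using Pu by (elim conjE) assumption
  have ears: "\<forall>e\<in>set D. is_ear e" using Pu by (elim conjE) assumption
  have disj: "\<forall>i<length D. \<forall>k<length D. i \<noteq> k \<longrightarrow> ear_arcs (D ! i) \<inter> ear_arcs (D ! k) = {}"
    using Pu by (elim conjE) assumption
  have pre: "\<forall>i. 1 \<le> i \<and> i < length D \<longrightarrow>
        (let prev = (\<Union>k<i. ear_verts (D ! k)) in
          (if is_cycle (D ! i) then card (ear_verts (D ! i) \<inter> prev) = 1
           else ear_verts (D ! i) \<inter> prev = {hd (snd (D ! i)), last (snd (D ! i))}))"
    using Pu by (elim conjE) assumption
  have sub1: "UVD D \<subseteq> V" using Pu by (elim conjE) assumption
  have sub2: "UFD D \<subseteq> E" using Pu by (elim conjE) assumption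
  note sub = sub1 sub2

  let ?D = "D @ [e]"
  have nth1: "?D ! k = D ! k" if "k < length D" for k using that by (simp add: nth_append)
  have nth2: "?D ! length D = e" by simp
  have f1: "is_cycle (?D ! 0)" using cyc0 Dne nth1[of 0] by simp
  have f2: "\<forall>e\<in>set ?D. is_ear e" using ears ie by simp
  have f3: "\<forall>i<length ?D. \<forall>k<length ?D. i \<noteq> k \<longrightarrow> ear_arcs (?D ! i) \<inter> ear_arcs (?D ! k) = {}"
  proof (intro allI impI)
    fix i k assume i: "i < length ?D" and k: "k < length ?D" and ik: "i \<noteq> k"
    show "ear_arcs (?D ! i) \<inter> ear_arcs (?D ! k) = {}"
    proof (cases "i < length D")
      case True note iT = True
      have subi: "ear_arcs (D!i) \<subseteq> UFD D" using iT by (intro UN_upper) simp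
      show ?thesis
      proof (cases "k < length D")
        case True
        have "ear_arcs (D!i) \<inter> ear_arcs (D!k) = {}" using disj[rule_format, OF iT True ik] .
        thus ?thesis using nth1[OF iT] nth1[OF True] by simp
      next
        case False
        hence "k = length D" using k by simp
        hence "?D ! k = e" by simp
        moreover have "ear_arcs (D!i) \<inter> ear_arcs e = {}" using dj subi by auto
        ultimately show ?thesis using nth1[OF iT] by simp
      qed
    next
      case False
      hence i': "i = length D" using i by simp
      hence kD: "k < length D" using k ik by simp
      have subk: "ear_arcs (D!k) \<subseteq> UFD D" using kD by (intro UN_upper) simp
      have "ear_arcs e \<inter> ear_arcs (D!k) = {}" using dj subk by auto
      thus ?thesis using nth1[OF kD] i' by simp
    qed
  qed
  have f4: "\<forall>i. 1 \<le> i \<and> i < length ?D \<longrightarrow>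
        (let prev = (\<Union>k<i. ear_verts (?D ! k)) in
          (if is_cycle (?D ! i) then card (ear_verts (?D ! i) \<inter> prev) = 1
           else ear_verts (?D ! i) \<inter> prev = {hd (snd (?D ! i)), last (snd (?D ! i))}))"
  proof (intro allI impI)
    fix i assume i: "1 \<le> i \<and> i < length ?D"
    show "let prev = (\<Union>k<i. ear_verts (?D ! k)) in
          (if is_cycle (?D ! i) then card (ear_verts (?D ! i) \<inter> prev) = 1
           else ear_verts (?D ! i) \<inter> prev = {hd (snd (?D ! i)), last (snd (?D ! i))})"
    proof (cases "i < length D")
      case True
      have eq: "(\<Union>k<i. ear_verts (?D ! k)) = (\<Union>k<i. ear_verts (D ! k))" using True nth1 by auto
      have "let prev = (\<Union>k<i. ear_verts (D ! k)) in
          (if is_cycle (D ! i) then card (ear_verts (D ! i) \<inter> prev) = 1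
           else ear_verts (D ! i) \<inter> prev = {hd (snd (D ! i)), last (snd (D ! i))})"
        using pre True i by blast
      then show ?thesis unfolding eq nth1[OF True] .
    next
      case False
      hence i': "i = length D" using i by simp
      have "(\<Union>k<i. ear_verts (?D ! k)) = (\<Union>k<length D. ear_verts (D ! k))" using i' nth1 by auto
      also have "\<dots> = UVD D" by (rule UN_nth)
      finally show ?thesis using cond i' by (simp add: Let_def)
    qed
  qed
  have fne: "?D \<noteq> []" by simp
  have "ear_decomposition (UVD ?D) (UFD ?D) ?D" unfolding ear_decomposition_def
    by (intro conjI fne f1 f2 f3 f4 refl)
  moreover have "UVD ?D \<subseteq> V" "UFD ?D \<subseteq> E" using sub vV aE by auto
  ultimately show ?thesis unfolding pdec_def by simp
qed
lemma crossing0: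
  assumes "(u, z) \<in> E\<^sup>*" "u \<in> U" "z \<notin> U"
  shows "\<exists>x y. (x, y) \<in> E \<and> x \<in> U \<and> y \<notin> U"
  using assms by (induction rule: rtrancl_induct) auto

lemma crossing:
  assumes "(u, z) \<in> E\<^sup>*" "u \<in> U" "z \<notin> U"
  obtains x y where "(x, y) \<in> E" "x \<in> U" "y \<notin> U"
  using crossing0[OF assms] by blast

lemma diff_psub: "a \<in> E - F \<Longrightarrow> a \<in> A \<Longrightarrow> E - (F \<union> A) \<subset> E - F" by blast

lemma ex_diff: "F \<subseteq> E \<Longrightarrow> F \<noteq> E \<Longrightarrow> \<exists>p. p \<in> E \<and> p \<notin> F" by blast
lemma not_sub_ex: "\<not> A \<subseteq> B \<Longrightarrow> (\<And>z. z \<in> A \<Longrightarrow> z \<notin> B \<Longrightarrow> thesis) \<Longrightarrow> thesis" by blast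

lemma pdec_grow:
  assumes EV: "E \<subseteq> V \<times> V" and nl: "\<forall>i. (i, i) \<notin> E"
    and sc: "strongly_connected V E" and fin: "finite E"
  shows "pdec V E D \<Longrightarrow> \<exists>D'. pdec V E D' \<and> UFD D' = E"
proof (induction "card (E - UFD D)" arbitrary: D rule: less_induct)
  case less
  note P = less.prems
  note Pu = P[unfolded pdec_def ear_decomposition_def]
  have Dne: "D \<noteq> []" using Pu by (elim conjE) assumption
  have ears: "\<forall>e\<in>set D. is_ear e" using Pu by (elim conjE) assumption
  have sub1: "UVD D \<subseteq> V" using Pu by (elim conjE) assumption
  have sub2: "UFD D \<subseteq> E" using Pu by (elim conjE) assumption
  show ?case
  proof (cases "UFD D = E")
    case True then show ?thesis using P by (intro exI[of _ D]) simp
  next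
    case False
    let ?F = "UFD D" and ?U = "UVD D"
    have FU: "?F \<subseteq> ?U \<times> ?U"
    proof
      fix p assume "p \<in> ?F"
      then obtain e' where e': "e' \<in> set D" "p \<in> ear_arcs e'" by blast
      hence pv: "p \<in> ear_verts e' \<times> ear_verts e'" using ear_arcs_verts by blast
      have "ear_verts e' \<subseteq> ?U" using e'(1) by blast
      thus "p \<in> ?U \<times> ?U" using pv by (auto simp: mem_Times_iff)
    qed
    have "D ! 0 \<in> set D" using Dne by simp
    hence "is_ear (D!0)" using ears by blast
    then obtain u where u: "u \<in> ear_verts (D!0)" unfolding is_ear_def ear_verts_def
      by (cases "snd (D!0)") auto
    hence uU: "u \<in> ?U" using \<open>D ! 0 \<in> set D\<close> by blast
    obtain x y where xy: "(x, y) \<in> E" "(x, y) \<notin> ?F" "x \<in> ?U"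
    proof (cases "V \<subseteq> ?U")
      case True
      obtain p where p: "p \<in> E" "p \<notin> ?F" using ex_diff[OF sub2 False] by blast
      obtain x y where pxy: "p = (x, y)" by (cases p)
      have "x \<in> V" using EV p(1) pxy by auto
      hence "x \<in> ?U" by (rule subsetD[OF True])
      thus ?thesis using that p pxy by blast
    next
      case False
      then obtain z where z: "z \<in> V" "z \<notin> ?U" by (rule not_sub_ex)
      have uV: "u \<in> V" using sub1 uU by (rule subsetD)
      have "(u, z) \<in> E\<^sup>*" using sc uV z(1) unfolding strongly_connected_def by blast
      then obtain x y where xy': "(x, y) \<in> E" "x \<in> ?U" "y \<notin> ?U" by (rule crossing[OF _ uU z(2)])
      have "(x, y) \<notin> ?F" using FU xy'(3) by (auto simp: mem_Times_iff)
      thus ?thesis by (rule that[OF xy'(1) _ xy'(2)])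
    qed
    have xyV: "x \<in> V" "y \<in> V" using xy(1) EV by auto
    have yx: "(y, x) \<in> E\<^sup>*" using sc xyV unfolding strongly_connected_def by blast
    have neq: "x \<noteq> y" using nl xy(1) by auto
    from new_ear[OF xy(3) xy(1) yx EV neq] obtain e where eall: "is_ear e \<and> ear_verts e \<subseteq> V \<and> ear_arcs e \<subseteq> E \<and> (x, y) \<in> ear_arcs e
     \<and> ear_arcs e \<subseteq> insert (x, y) {(a, b). a \<notin> ?U \<or> b \<notin> ?U}
     \<and> (if is_cycle e then card (ear_verts e \<inter> ?U) = 1
        else ear_verts e \<inter> ?U = {hd (snd e), last (snd e)})
     \<and> (?U = {x} \<longrightarrow> is_cycle e)" ..
    have e: "is_ear e" "ear_verts e \<subseteq> V" "ear_arcs e \<subseteq> E" "(x, y) \<in> ear_arcs e"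
      "ear_arcs e \<subseteq> insert (x, y) {(a, b). a \<notin> ?U \<or> b \<notin> ?U}"
      "if is_cycle e then card (ear_verts e \<inter> ?U) = 1 else ear_verts e \<inter> ?U = {hd (snd e), last (snd e)}"
      using eall[THEN conjunct1] eall[THEN conjunct2, THEN conjunct1]
        eall[THEN conjunct2, THEN conjunct2, THEN conjunct1]
        eall[THEN conjunct2, THEN conjunct2, THEN conjunct2, THEN conjunct1]
        eall[THEN conjunct2, THEN conjunct2, THEN conjunct2, THEN conjunct2, THEN conjunct1]
        eall[THEN conjunct2, THEN conjunct2, THEN conjunct2, THEN conjunct2, THEN conjunct2, THEN conjunct1]
      by - assumption+
    have dj: "ear_arcs e \<inter> ?F = {}"
    proof (rule ccontr)
      assume "ear_arcs e \<inter> ?F \<noteq> {}"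
      then obtain p where p: "p \<in> ear_arcs e" "p \<in> ?F" by blast
      obtain a b where ab: "p = (a, b)" by (cases p)
      have "a \<in> ?U" "b \<in> ?U" using FU p(2) ab by (auto simp: mem_Times_iff)
      moreover have "p \<noteq> (x, y)" using p(2) xy(2) by auto
      ultimately show False using e(5) p(1) ab by auto
    qed
    have P': "pdec V E (D @ [e])" by (rule pdec_extend[OF P e(1) dj e(2) e(3) e(6)])
    have uf: "UFD (D @ [e]) = ?F \<union> ear_arcs e" by (simp add: Un_commute)
    have "E - (?F \<union> ear_arcs e) \<subset> E - ?F" by (rule diff_psub[OF _ e(4)]) (use xy(1,2) in simp)
    hence "E - UFD (D @ [e]) \<subset> E - ?F" unfolding uf .
    hence "card (E - UFD (D @ [e])) < card (E - ?F)" using fin by (intro psubset_card_mono) auto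
    from less.hyps[OF this P'] show ?thesis .
  qed
qed

lemma exists_dec:
  assumes EV: "E \<subseteq> V \<times> V" and nl: "\<forall>i. (i, i) \<notin> E"
    and sc: "strongly_connected V E" and fin: "finite E"
    and v: "v1 \<in> V" "v2 \<in> V" "v1 \<noteq> v2"
  shows "\<exists>D. ear_decomposition V E D"
proof -
  have "(v1, v2) \<in> E\<^sup>*" using sc v unfolding strongly_connected_def by blast
  then obtain c where c: "(v1, c) \<in> E" using v(3) by (metis converse_rtranclE)
  have cV: "c \<in> V" using c EV by auto
  have cv: "(c, v1) \<in> E\<^sup>*" using sc cV v(1) unfolding strongly_connected_def by blast
  have neq: "v1 \<noteq> c" using nl c by auto
  obtain e where e: "is_ear e" "ear_verts e \<subseteq> V" "ear_arcs e \<subseteq> E" "is_cycle e"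
    using new_ear[of v1 "{v1}" c E V, OF _ c cv EV neq] by auto
  have "ear_decomposition (UVD [e]) (UFD [e]) [e]"
    unfolding ear_decomposition_def using e by auto
  hence P0: "pdec V E [e]" unfolding pdec_def using e by simp
  obtain D where D: "pdec V E D" "UFD D = E" using pdec_grow[OF EV nl sc fin P0] by blast
  have "UVD D = V"
  proof
    show "UVD D \<subseteq> V" using D(1) unfolding pdec_def by blast
    show "V \<subseteq> UVD D"
    proof
      fix v assume vV: "v \<in> V"
      obtain w where w: "w \<in> V" "w \<noteq> v" using v by blast
      have "(v, w) \<in> E\<^sup>*" using sc vV w(1) unfolding strongly_connected_def by blast
      then obtain d where "(v, d) \<in> E" using w(2) by (metis converse_rtranclE)
      then obtain e' where "e' \<in> set D" "(v, d) \<in> ear_arcs e'" using D(2) by blast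
      thus "v \<in> UVD D" using ear_arcs_verts by blast
    qed
  qed
  thus ?thesis using D(1) D(2) unfolding pdec_def by metis
qed

theorem corollary5:
  fixes m n :: nat and E :: "(nat \<times> nat) set"
  assumes "m \<ge> 2"
    and "E \<subseteq> {1..m} \<times> {1..m}"
    and "\<forall>i. (i, i) \<notin> E"
    and "strongly_connected {1..m} E"
    and "chi {1..m} E \<le> n"
  shows "\<exists>C :: nat \<times> nat \<Rightarrow> real mat.
           (\<forall>a\<in>E. dim_col (C a) = n \<and> mat_kernel (C a) \<noteq> {0\<^sub>v n}) \<and>
           well_configured n {1..m} E C"
proof -
  have fin: "finite E" using finite_subset[OF assms(2)] by simp
  have "\<exists>D. ear_decomposition {1..m} E D"
    by (rule exists_dec[OF assms(2) assms(3) assms(4) fin, of 1 2]) (use assms(1) in auto)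
  then obtain D0 where D0: "ear_decomposition {1..m} E D0" by blast
  define S where "S = {Max (ear_len ` set D) | D. ear_decomposition {1..m} E D}"
  have Sne: "S \<noteq> {}" using D0 by (auto simp: S_def)
  have "S \<subseteq> {..card E}"
  proof
    fix s assume "s \<in> S"
    then obtain D where D: "ear_decomposition {1..m} E D" and s: "s = Max (ear_len ` set D)"
      by (auto simp: S_def)
    have Dne: "D \<noteq> []" using D by (simp add: ear_decomposition_def)
    have UE: "(\<Union>e\<in>set D. ear_arcs e) = E" using D by (simp add: ear_decomposition_def)
    have "\<forall>e\<in>set D. ear_len e \<le> card E"
    proof
      fix e assume "e \<in> set D"
      hence "ear_arcs e \<subseteq> E" using UE by blast
      thus "ear_len e \<le> card E" unfolding ear_len_def using fin by (rule card_mono[rotated])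
    qed
    hence "Max (ear_len ` set D) \<le> card E" using Dne by (simp add: Max_le_iff)
    thus "s \<in> {..card E}" using s by simp
  qed
  hence finS: "finite S" by (rule finite_subset) simp
  have "chi {1..m} E \<in> S" unfolding chi_def S_def[symmetric] using finS Sne by (rule Min_in)
  then obtain D where D: "ear_decomposition {1..m} E D" and mx: "Max (ear_len ` set D) = chi {1..m} E"
    by (auto simp: S_def)
  show ?thesis by (rule dec_wc[OF D]) (use mx assms(5) in simp)
qed

end
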